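(* Let $H_0$ be a bounded operator on a Hilbert space with $\|H_0\|=1$, finite-dimensional kernel, and a bounded reflexive generalized inverse. Let $\mathcal{S}$ be a set of bounded operators of unit norm (the perturbations in the symmetry class). Then $\mathrm{Ker}\,H_0$ is stable against every $w\in\mathcal{S}$ if and only if for every $w\in\mathcal{S}$ there is $\lambda_0>0$ such that $\dim\mathrm{Ker}(H_0+\lambda w)=\dim\mathrm{Ker}\,H_0$ for all real $\lambda$ with $|\lambda|<\lambda_0$.
   Context: A reflexive generalized inverse of $H_0$ is an operator $H_0^{(-1)}$ with $H_0^{(-1)}H_0H_0^{(-1)}=H_0^{(-1)}$ and $H_0H_0^{(-1)}H_0=H_0$. For a closed subspace $\mathcal{V}$, $P_{\mathcal{V}}$ is the orthogonal projector onto it. $\mathrm{Ker}\,H_0$ is stable against a perturbation $w$ if $\lim_{\lambda\to0,\lambda\in\mathbb{R}}P_{\mathrm{Ker}(H_0+\lambda w)}=P_{\mathrm{Ker}H_0}$ in operator norm. *)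

theory Defs
  imports "HOL-Analysis.Analysis"
begin

definition ker_op :: "('a::real_normed_vector \<Rightarrow>\<^sub>L 'a) \<Rightarrow> 'a set" where
  "ker_op H = {x. blinfun_apply H x = 0}"

definition has_fin_dim :: "'a::real_vector set \<Rightarrow> nat \<Rightarrow> bool" where
  "has_fin_dim V n \<longleftrightarrow> (\<exists>B. finite B \<and> independent B \<and> span B = V \<and> card B = n)"

definition orth_proj :: "'a::real_inner set \<Rightarrow> 'a \<Rightarrow> 'a" where
  "orth_proj V x = (THE y. y \<in> V \<and> (\<forall>v\<in>V. inner (x - y) v = 0))"

definition refl_gen_inverse :: "('a::real_normed_vector \<Rightarrow>\<^sub>L 'a) \<Rightarrow> ('a \<Rightarrow>\<^sub>L 'a) \<Rightarrow> bool" where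
  "refl_gen_inverse G H \<longleftrightarrow> G o\<^sub>L H o\<^sub>L G = G \<and> H o\<^sub>L G o\<^sub>L H = H"

definition ker_stable :: "('a::{real_inner,complete_space} \<Rightarrow>\<^sub>L 'a) \<Rightarrow> ('a \<Rightarrow>\<^sub>L 'a) \<Rightarrow> bool" where
  "ker_stable H0 w \<longleftrightarrow>
     ((\<lambda>t::real. onorm (\<lambda>x. orth_proj (ker_op (H0 + t *\<^sub>R w)) x - orth_proj (ker_op H0) x))
        \<longlongrightarrow> 0) (at 0)"

end

theory Submission
  imports Defs
begin

lemma proj_ex_aux:
  fixes B :: "'a::real_inner set"
  assumes "finite B"
  shows "\<forall>x. \<exists>y\<in>span B. \<forall>v\<in>span B. inner (x - y) v = 0"
  using assms
proof (induction B rule: finite_induct)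
  case empty
  then show ?case by auto
next
  case (insert a B)
  from insert.IH obtain Q where Q: "\<And>x. Q x \<in> span B" "\<And>x v. v \<in> span B \<Longrightarrow> inner (x - Q x) v = 0"
    by metis
  define a' where "a' = a - Q a"
  have a'o: "\<And>v. v \<in> span B \<Longrightarrow> inner a' v = 0" using Q a'_def by auto
  show ?case
  proof
    fix x
    show "\<exists>y\<in>span (insert a B). \<forall>v\<in>span (insert a B). inner (x - y) v = 0"
    proof (cases "a' = 0")
      case True
      then have "a = Q a" using a'_def by simp
      then have "a \<in> span B" using Q(1)[of a] by simp
      then have "span (insert a B) = span B" by (simp add: span_redundant)
      then show ?thesis using Q(1)[of x] Q(2)[of _ x] by auto
    next
      case False
      define y where "y = Q x + (inner (x - Q x) a' / inner a' a') *\<^sub>R a'"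
      have ya: "y \<in> span (insert a B)"
        unfolding y_def a'_def
        by (meson Q(1) insertI1 span_add span_base span_diff span_mono span_mul subsetD subset_insertI)
      have o1: "orthogonal (x - y) b" if "b \<in> insert a B" for b
      proof -
        have ob: "inner (x - y) v = 0" if "v \<in> span B" for v
          using Q(2)[OF that, of x] a'o[OF that]
          by (simp add: y_def inner_diff_left inner_add_left)
        have oa': "inner (x - y) a' = 0"
          using False by (simp add: y_def inner_diff_left inner_add_left)
        show ?thesis
        proof (cases "b = a")
          case True
          have "a = a' + Q a" by (simp add: a'_def)
          then have "inner (x - y) a = inner (x - y) a' + inner (x - y) (Q a)"
            by (metis inner_add_right)
          then show ?thesis using True oa' ob[OF Q(1)] by (simp add: orthogonal_def)
        next
          case False
          then have "b \<in> span B" using that by (auto intro: span_base)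
          then show ?thesis using ob by (simp add: orthogonal_def)
        qed
      qed
      show ?thesis
        using ya o1 orthogonal_to_span by (metis orthogonal_def)
    qed
  qed
qed

lemma proj_char:
  fixes V :: "'a::real_inner set"
  assumes "finite B" "span B = V"
  shows "orth_proj V x \<in> V \<and> (\<forall>v\<in>V. inner (x - orth_proj V x) v = 0)"
proof -
  have ex: "\<exists>y. y \<in> V \<and> (\<forall>v\<in>V. inner (x - y) v = 0)"
    using proj_ex_aux[OF assms(1)] assms(2) by blast
  have un: "y1 = y2" if "y1 \<in> V \<and> (\<forall>v\<in>V. inner (x - y1) v = 0)"
     "y2 \<in> V \<and> (\<forall>v\<in>V. inner (x - y2) v = 0)" for y1 y2
  proof -
    have "y1 - y2 \<in> V" using that assms(2) by (metis span_diff)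
    then have "inner (x - y2) (y1 - y2) - inner (x - y1) (y1 - y2) = 0" using that by auto
    then have "inner (y1 - y2) (y1 - y2) = 0" by (simp add: inner_diff_left inner_diff_right inner_commute)
    then show ?thesis by simp
  qed
  show ?thesis unfolding orth_proj_def
    by (rule theI'[of "\<lambda>y. y \<in> V \<and> (\<forall>v\<in>V. inner (x - y) v = 0)"]) (use ex un in blast)
qed

lemma proj_eq:
  fixes V :: "'a::real_inner set"
  assumes "finite B" "span B = V" "y \<in> V" "\<forall>v\<in>V. inner (x - y) v = 0"
  shows "orth_proj V x = y"
proof -
  have c: "orth_proj V x \<in> V \<and> (\<forall>v\<in>V. inner (x - orth_proj V x) v = 0)" using proj_char[OF assms(1,2)] .
  have "y - orth_proj V x \<in> V" using c assms by (metis span_diff)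
  then have "inner (x - orth_proj V x) (y - orth_proj V x) - inner (x - y) (y - orth_proj V x) = 0"
    using c assms by auto
  then have "inner (y - orth_proj V x) (y - orth_proj V x) = 0"
    by (simp add: inner_diff_left inner_diff_right inner_commute)
  then show ?thesis by simp
qed

lemma proj_in: "finite B \<Longrightarrow> span B = V \<Longrightarrow> orth_proj V x \<in> V"
  using proj_char by blast
lemma proj_orth: "finite B \<Longrightarrow> span B = V \<Longrightarrow> v \<in> V \<Longrightarrow> inner (x - orth_proj V x) v = 0"
  using proj_char by blast
lemma proj_id: "finite B \<Longrightarrow> span B = V \<Longrightarrow> x \<in> V \<Longrightarrow> orth_proj V x = x"
  by (rule proj_eq) auto

lemma proj_linear:
  fixes V :: "'a::real_inner set"
  assumes "finite B" "span B = V"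
  shows "bounded_linear (orth_proj V)"
proof -
  note i = proj_in[OF assms] and o = proj_orth[OF assms]
  have add: "orth_proj V (x + z) = orth_proj V x + orth_proj V z" for x z
  proof (rule proj_eq[OF assms])
    show "orth_proj V x + orth_proj V z \<in> V"
      using span_add[of "orth_proj V x" B "orth_proj V z"] i[of x] i[of z] assms(2) by simp
    show "\<forall>v\<in>V. inner (x + z - (orth_proj V x + orth_proj V z)) v = 0"
    proof
      fix v assume v: "v \<in> V"
      have "inner (x + z - (orth_proj V x + orth_proj V z)) v
          = inner (x - orth_proj V x) v + inner (z - orth_proj V z) v"
        by (simp add: inner_diff_left inner_add_left)
      then show "inner (x + z - (orth_proj V x + orth_proj V z)) v = 0" using o[OF v] by simp
    qed
  qed
  have sc: "orth_proj V (r *\<^sub>R x) = r *\<^sub>R orth_proj V x" for r x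
  proof (rule proj_eq[OF assms])
    show "r *\<^sub>R orth_proj V x \<in> V"
      using span_mul[of "orth_proj V x" B r] i[of x] assms(2) by simp
    show "\<forall>v\<in>V. inner (r *\<^sub>R x - r *\<^sub>R orth_proj V x) v = 0"
    proof
      fix v assume v: "v \<in> V"
      have "inner (r *\<^sub>R x - r *\<^sub>R orth_proj V x) v = r * inner (x - orth_proj V x) v"
        by (simp only: scaleR_diff_right[symmetric] inner_scaleR_left)
      then show "inner (r *\<^sub>R x - r *\<^sub>R orth_proj V x) v = 0" using o[OF v] by simp
    qed
  qed
  have nb: "norm (orth_proj V x) \<le> norm x * 1" for x
  proof -
    have "inner (orth_proj V x) (orth_proj V x) = inner x (orth_proj V x)"
      using o[OF i, of x x] by (simp add: inner_diff_left)
    also have "\<dots> \<le> norm x * norm (orth_proj V x)" by (rule norm_cauchy_schwarz)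
    finally have h: "norm (orth_proj V x) * norm (orth_proj V x) \<le> norm x * norm (orth_proj V x)"
      by (simp add: power2_norm_eq_inner[symmetric] power2_eq_square)
    show ?thesis
    proof (cases "norm (orth_proj V x) = 0")
      case True then show ?thesis by simp
    next
      case False then have "norm (orth_proj V x) > 0" by simp
      then show ?thesis using mult_right_le_imp_le[OF h] by simp
    qed
  qed
  show ?thesis
    by (rule bounded_linear_intro[of _ 1]) (rule add, rule sc, rule nb)
qed

lemma proj_pyth:
  fixes V :: "'a::real_inner set"
  assumes "finite B" "span B = V" "v \<in> V"
  shows "norm (x - v)^2 = norm (x - orth_proj V x)^2 + norm (orth_proj V x - v)^2"
proof -
  have "orth_proj V x - v \<in> V" using proj_in[OF assms(1,2)] assms by (metis span_diff)
  then have o: "inner (x - orth_proj V x) (orth_proj V x - v) = 0" using proj_orth[OF assms(1,2)] by blast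
  have "x - v = (x - orth_proj V x) + (orth_proj V x - v)" by simp
  then have "norm (x - v)^2 = norm ((x - orth_proj V x) + (orth_proj V x - v))^2" by simp
  also have "\<dots> = norm (x - orth_proj V x)^2 + norm (orth_proj V x - v)^2"
    using norm_add_Pythagorean[of "x - orth_proj V x" "orth_proj V x - v"] o by (simp only: orthogonal_def)
  finally show ?thesis .
qed

lemma proj_dist:
  fixes V :: "'a::real_inner set"
  assumes "finite B" "span B = V" "v \<in> V"
  shows "norm (x - orth_proj V x) \<le> norm (x - v)"
proof -
  have "norm (x - orth_proj V x)^2 \<le> norm (x - v)^2"
    using proj_pyth[OF assms, of x] by simp
  then show ?thesis using power2_le_imp_le norm_ge_zero by blast
qed

lemma proj_le: "finite B \<Longrightarrow> span B = V \<Longrightarrow> norm (orth_proj V x) \<le> norm x"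
proof -
  assume a: "finite B" "span B = V"
  have "norm (orth_proj V x)^2 \<le> norm x^2"
    using proj_pyth[OF a, of 0 x] a span_zero[of B] by simp
  then show ?thesis using power2_le_imp_le norm_ge_zero by blast
qed

lemma proj_comp_le: "finite B \<Longrightarrow> span B = V \<Longrightarrow> norm (x - orth_proj V x) \<le> norm x"
  using proj_dist[of B V 0 x] by (metis diff_zero span_zero)


lemma ker_subspace: "subspace (ker_op H)"
  unfolding ker_op_def subspace_def
  by (simp add: blinfun.add_right blinfun.scaleR_right blinfun.zero_right)

lemma est:
  fixes H0 w G :: "'a::{real_inner,complete_space} \<Rightarrow>\<^sub>L 'a"
  assumes B0: "finite B0" "span B0 = ker_op H0"
    and G: "refl_gen_inverse G H0" and w: "norm w = 1"
    and x: "x \<in> ker_op (H0 + t *\<^sub>R w)"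
  shows "norm (x - orth_proj (ker_op H0) x) \<le> (norm G + 1) * \<bar>t\<bar> * norm x"
proof -
  have e: "blinfun_apply H0 x + t *\<^sub>R blinfun_apply w x = 0"
    using x by (simp add: ker_op_def plus_blinfun.rep_eq scaleR_blinfun.rep_eq)
  have "H0 o\<^sub>L G o\<^sub>L H0 = H0" using G by (simp add: refl_gen_inverse_def)
  then have hg: "blinfun_apply H0 (blinfun_apply G (blinfun_apply H0 x)) = blinfun_apply H0 x"
    by (metis blinfun_apply_blinfun_compose)
  have "x - blinfun_apply G (blinfun_apply H0 x) \<in> ker_op H0"
    using hg by (simp add: ker_op_def blinfun.diff_right)
  then have "norm (x - orth_proj (ker_op H0) x) \<le> norm (x - (x - blinfun_apply G (blinfun_apply H0 x)))"
    by (rule proj_dist[OF B0])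
  also have "\<dots> = norm (blinfun_apply G (blinfun_apply H0 x))" by simp
  also have "\<dots> \<le> norm G * norm (blinfun_apply H0 x)" by (rule norm_blinfun)
  also have "norm (blinfun_apply H0 x) = \<bar>t\<bar> * norm (blinfun_apply w x)"
  proof -
    have "blinfun_apply H0 x = - (t *\<^sub>R blinfun_apply w x)" using e by (simp add: eq_neg_iff_add_eq_0)
    then show ?thesis by simp
  qed
  also have "norm (blinfun_apply w x) \<le> norm x" using norm_blinfun[of w x] w by simp
  then have "norm G * (\<bar>t\<bar> * norm (blinfun_apply w x)) \<le> norm G * (\<bar>t\<bar> * norm x)"
    by (simp add: mult_left_mono)
  also have "\<dots> \<le> (norm G + 1) * \<bar>t\<bar> * norm x"
    using mult_right_mono[of "norm G" "norm G + 1" "\<bar>t\<bar> * norm x"] by (simp add: mult.assoc)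
  finally show ?thesis by simp
qed

lemma fin:
  fixes V :: "'a::real_inner set"
  assumes B0: "finite B0" "independent B0" "span B0 = K"
    and V: "subspace V"
    and e: "e < 1" and est: "\<And>x. x \<in> V \<Longrightarrow> norm (x - orth_proj K x) \<le> e * norm x"
  shows "inj_on (orth_proj K) V"
    and "\<exists>B. finite B \<and> independent B \<and> span B = V \<and> card B \<le> card B0"
proof -
  have lin: "linear (orth_proj K)" using proj_linear[OF B0(1,3)] bounded_linear.linear by blast
  show inj: "inj_on (orth_proj K) V"
  proof (subst linear_inj_on_iff_eq_0[OF lin V], intro ballI impI)
    fix x assume "x \<in> V" "orth_proj K x = 0"
    then have "norm x \<le> e * norm x" using est by fastforce
    then have "(1 - e) * norm x \<le> 0" by (simp add: algebra_simps)
    then have "norm x \<le> 0" using e by (simp add: mult_le_0_iff)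
    then show "x = 0" by simp
  qed
  obtain B where B: "B \<subseteq> V" "independent B" "V \<subseteq> span B" "card B = dim V"
    by (rule basis_exists)
  have sB: "span B = V" using B V by (simp add: span_minimal subset_antisym)
  have ind: "independent (orth_proj K ` B)"
    by (rule linear_independent_injective_image[OF lin B(2)]) (use inj sB in simp)
  have sub: "orth_proj K ` B \<subseteq> span B0" using proj_in[OF B0(1,3)] B0(3) by auto
  have fc: "finite (orth_proj K ` B) \<and> card (orth_proj K ` B) \<le> card B0"
    by (rule independent_span_bound[OF B0(1) ind sub])
  have ij: "inj_on (orth_proj K) B" using inj B(1) inj_on_subset by blast
  have "finite B" using fc finite_imageD[OF _ ij] by blast
  moreover have "card B \<le> card B0" using fc card_image[OF ij] by simp
  ultimately show "\<exists>B. finite B \<and> independent B \<and> span B = V \<and> card B \<le> card B0"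
    using B(2) sB by blast
qed


lemma backward:
  fixes H0 w G :: "'a::{real_inner,complete_space} \<Rightarrow>\<^sub>L 'a"
  assumes B0: "finite B0" "independent B0" "span B0 = ker_op H0"
    and G: "refl_gen_inverse G H0" and w: "norm w = 1"
    and l0: "l0 > 0" "\<forall>t::real. \<bar>t\<bar> < l0 \<longrightarrow> has_fin_dim (ker_op (H0 + t *\<^sub>R w)) (dim (ker_op H0))"
  shows "ker_stable H0 w"
proof -
  define c where "c = norm G + 1"
  have c0: "c > 0" unfolding c_def by (smt (verit) norm_ge_zero)
  define K where "K = ker_op H0"
  define P where "P = orth_proj K"
  have dimK: "dim K = card B0" using B0 dim_span_eq_card_independent K_def by metis
  have Pbl: "bounded_linear P" unfolding P_def using proj_linear[OF B0(1)] B0(3) K_def by blast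
  have Plin: "linear P" using Pbl bounded_linear.linear by blast
  have key: "onorm (\<lambda>x. orth_proj (ker_op (H0 + t *\<^sub>R w)) x - P x) \<le> 3 * c * \<bar>t\<bar>
      \<and> 0 \<le> onorm (\<lambda>x. orth_proj (ker_op (H0 + t *\<^sub>R w)) x - P x)"
    if t: "\<bar>t\<bar> < l0" "\<bar>t\<bar> < 1 / (2 * c)" for t
  proof -
    define V where "V = ker_op (H0 + t *\<^sub>R w)"
    define Pt where "Pt = orth_proj V"
    define e where "e = c * \<bar>t\<bar>"
    have e0: "0 \<le> e" using c0 by (simp add: e_def)
    have e2: "e \<le> 1/2" using t(2) c0 by (simp add: e_def field_simps)
    obtain Bt where Bt: "finite Bt" "independent Bt" "span Bt = V" "card Bt = card B0"
      using l0(2) t(1) dimK unfolding has_fin_dim_def V_def K_def by metis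
    have Ptbl: "bounded_linear Pt" unfolding Pt_def using proj_linear[OF Bt(1,3)] .
    have estV: "\<And>x. x \<in> V \<Longrightarrow> norm (x - P x) \<le> e * norm x"
      unfolding P_def K_def e_def c_def V_def using est[OF B0(1,3) G w] by (simp add: mult.assoc)
    have Vs: "subspace V" unfolding V_def by (rule ker_subspace)
    have inj: "inj_on P V"
      using fin(1)[OF B0(1,2) _ Vs _ estV[unfolded P_def]] B0(3) e2 unfolding K_def P_def by auto
    have surj: "\<exists>x\<in>V. P x = y" if y: "y \<in> K" for y
    proof -
      have BtV: "Bt \<subseteq> V" using span_superset[of Bt] Bt(3) by simp
      have inj2: "inj_on P (span Bt)" using inj Bt(3) by simp
      have ind: "independent (P ` Bt)"
        by (rule linear_independent_injective_image[OF Plin Bt(2) inj2])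
      have sub: "P ` Bt \<subseteq> span B0"
      proof
        fix u assume "u \<in> P ` Bt"
        then obtain b where "u = P b" by blast
        then show "u \<in> span B0" using proj_in[OF B0(1,3)] B0(3) unfolding P_def K_def by simp
      qed
      have ij: "inj_on P Bt" by (rule inj_on_subset[OF inj BtV])
      have cP: "card (P ` Bt) = card B0" using card_image[OF ij] Bt(4) by simp
      have fP: "finite (P ` Bt)" using Bt(1) by simp
      have "y \<in> span (P ` Bt)"
      proof (rule ccontr)
        assume ns: "y \<notin> span (P ` Bt)"
        have yn: "y \<notin> P ` Bt" using ns span_superset[of "P ` Bt"] by auto
        have ind2: "independent (insert y (P ` Bt))" by (rule independent_insertI[OF ns ind])
        have yB: "y \<in> span B0" using y B0(3) unfolding K_def by simp
        have sub2: "insert y (P ` Bt) \<subseteq> span B0" using sub yB by simp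
        have "finite (insert y (P ` Bt)) \<and> card (insert y (P ` Bt)) \<le> card B0"
          by (rule independent_span_bound[OF B0(1) ind2 sub2])
        moreover have "card (insert y (P ` Bt)) = Suc (card (P ` Bt))"
          by (rule card_insert_disjoint[OF fP yn])
        ultimately show False using cP by simp
      qed
      then have "y \<in> P ` span Bt" using span_linear_image[OF Plin, of Bt] by simp
      then show ?thesis using Bt(3) by force
    qed
    have PK: "P z \<in> K" for z unfolding P_def using proj_in[OF B0(1)] B0(3) K_def by blast
    have Porth: "inner (z - P z) v = 0" if "v \<in> K" for z v
      unfolding P_def using proj_orth[OF B0(1)] B0(3) K_def that by blast
    have bound: "norm (Pt z - P z) \<le> (3 * c * \<bar>t\<bar>) * norm z" for z
    proof -
      define y where "y = P z"
      obtain x where x: "x \<in> V" "P x = y" using surj[OF PK] y_def by blast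
      have yz: "norm y \<le> norm z" unfolding y_def P_def using proj_le[OF B0(1)] B0(3) K_def by blast
      have zy: "norm (z - y) \<le> norm z" unfolding y_def P_def using proj_comp_le[OF B0(1)] B0(3) K_def by blast
      have ex: "norm (x - y) \<le> e * norm x" using estV[OF x(1)] x(2) by simp
      have "norm x \<le> norm y + norm (x - y)" by (metis norm_triangle_sub add.commute)
      then have "norm x \<le> norm y + e * norm x" using ex by simp
      then have "(1 - e) * norm x \<le> norm y" by (simp add: algebra_simps)
      moreover have "norm x \<le> 2 * ((1 - e) * norm x)"
      proof -
        have "norm x * 1 \<le> norm x * (2 * (1 - e))" using e2 by (intro mult_left_mono) auto
        then show ?thesis by (simp add: ac_simps)
      qed
      ultimately have nx: "norm x \<le> 2 * norm y" by simp
      have a1: "norm (y - Pt y) \<le> 2 * e * norm z"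
      proof -
        have "norm (y - Pt y) \<le> norm (y - x)" unfolding Pt_def by (rule proj_dist[OF Bt(1,3) x(1)])
        also have "\<dots> \<le> e * norm x" using ex by (simp add: norm_minus_commute)
        also have "\<dots> \<le> e * (2 * norm z)" using nx yz e0 by (intro mult_left_mono) auto
        finally show ?thesis by simp
      qed
      define u where "u = Pt (z - y)"
      have uV: "u \<in> V" unfolding u_def Pt_def by (rule proj_in[OF Bt(1,3)])
      have "inner u u = inner (z - y) u"
        using proj_orth[OF Bt(1,3) uV, of "z - y"] unfolding u_def Pt_def
        by (simp add: inner_diff_left)
      also have "\<dots> = inner (z - y) (u - P u)"
        using Porth[OF PK, of z u] unfolding y_def by (simp add: inner_diff_right)
      also have "\<dots> \<le> norm (z - y) * norm (u - P u)" by (rule norm_cauchy_schwarz)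
      also have "\<dots> \<le> norm z * (e * norm u)"
        using zy estV[OF uV] by (intro mult_mono) auto
      finally have "norm u * norm u \<le> (e * norm z) * norm u"
        by (simp add: power2_norm_eq_inner[symmetric] power2_eq_square algebra_simps)
      then have a2: "norm u \<le> e * norm z"
      proof (cases "norm u = 0")
        case True then show ?thesis using e0 by simp
      next
        case False then have "norm u > 0" by simp
        then show ?thesis using mult_right_le_imp_le[OF \<open>norm u * norm u \<le> (e * norm z) * norm u\<close>] by simp
      qed
      have "Pt z = u + Pt y" unfolding u_def using Ptbl
        by (simp add: linear_diff bounded_linear.linear)
      then have "Pt z - P z = u - (y - Pt y)" unfolding y_def by simp
      then have "norm (Pt z - P z) \<le> norm u + norm (y - Pt y)" by (simp add: norm_triangle_ineq4)
      also have "\<dots> \<le> 3 * e * norm z" using a1 a2 by simp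
      finally show ?thesis by (simp add: e_def)
    qed
    have blin: "bounded_linear (\<lambda>x. Pt x - P x)" by (rule bounded_linear_sub[OF Ptbl Pbl])
    show ?thesis
      unfolding Pt_def[symmetric] V_def[symmetric]
      using onorm_bound[OF _ bound] onorm_pos_le[OF blin] c0 by simp
  qed
  show ?thesis
    unfolding ker_stable_def P_def[symmetric] K_def[symmetric]
  proof (rule Lim_null_comparison)
    have "\<forall>\<^sub>F t in at (0::real). \<bar>t\<bar> < min l0 (1 / (2 * c))"
      using eventually_at[of "\<lambda>t::real. \<bar>t\<bar> < min l0 (1 / (2 * c))" 0 UNIV] l0(1) c0
      by (auto intro!: exI[of _ "min l0 (1 / (2 * c))"] simp: dist_norm)
    then show "\<forall>\<^sub>F t in at 0. norm (onorm (\<lambda>x. orth_proj (ker_op (H0 + t *\<^sub>R w)) x - P x)) \<le> 3 * c * \<bar>t\<bar>"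
      by eventually_elim (use key in auto)
    show "((\<lambda>t. 3 * c * \<bar>t\<bar>) \<longlongrightarrow> 0) (at (0::real))"
      by (rule tendsto_eq_intros refl | simp)+
  qed
qed


lemma forward:
  fixes H0 w G :: "'a::{real_inner,complete_space} \<Rightarrow>\<^sub>L 'a"
  assumes B0: "finite B0" "independent B0" "span B0 = ker_op H0"
    and G: "refl_gen_inverse G H0" and w: "norm w = 1"
    and st: "ker_stable H0 w"
  shows "\<exists>l0>0. \<forall>t::real. \<bar>t\<bar> < l0 \<longrightarrow> has_fin_dim (ker_op (H0 + t *\<^sub>R w)) (dim (ker_op H0))"
proof -
  define c where "c = norm G + 1"
  have c0: "c > 0" unfolding c_def by (smt (verit) norm_ge_zero)
  define K where "K = ker_op H0"
  define P where "P = orth_proj K"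
  have dimK: "dim K = card B0" using B0 dim_span_eq_card_independent K_def by metis
  have Pbl: "bounded_linear P" unfolding P_def using proj_linear[OF B0(1)] B0(3) K_def by blast
  have "\<forall>\<^sub>F t in at (0::real). onorm (\<lambda>x. orth_proj (ker_op (H0 + t *\<^sub>R w)) x - P x) < 1/2"
    by (rule order_tendstoD(2)[OF st[unfolded ker_stable_def P_def[symmetric] K_def[symmetric]]]) simp
  then obtain d where d: "d > 0" "\<And>t. t \<noteq> 0 \<Longrightarrow> dist t 0 < d \<Longrightarrow>
      onorm (\<lambda>x. orth_proj (ker_op (H0 + t *\<^sub>R w)) x - P x) < 1/2"
    unfolding eventually_at by auto
  have "\<forall>t::real. \<bar>t\<bar> < min d (1 / (2 * c)) \<longrightarrow> has_fin_dim (ker_op (H0 + t *\<^sub>R w)) (dim (ker_op H0))"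
  proof (intro allI impI)
    fix t :: real assume t: "\<bar>t\<bar> < min d (1 / (2 * c))"
    show "has_fin_dim (ker_op (H0 + t *\<^sub>R w)) (dim (ker_op H0))"
    proof (cases "t = 0")
      case True
      then show ?thesis unfolding has_fin_dim_def using B0 dimK K_def by (intro exI[of _ B0]) simp
    next
      case False
      define V where "V = ker_op (H0 + t *\<^sub>R w)"
      define Pt where "Pt = orth_proj V"
      define e where "e = c * \<bar>t\<bar>"
      have e2: "e < 1" using t c0 by (simp add: e_def field_simps)
      have estV: "\<And>x. x \<in> V \<Longrightarrow> norm (x - orth_proj K x) \<le> e * norm x"
        unfolding K_def e_def c_def V_def using est[OF B0(1,3) G w] by (simp add: mult.assoc)
      have Vs: "subspace V" unfolding V_def by (rule ker_subspace)
      obtain Bt where Bt: "finite Bt" "independent Bt" "span Bt = V" "card Bt \<le> card B0"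
        using fin(2)[OF B0(1,2) _ Vs e2 estV] B0(3) K_def by auto
      have Ptbl: "bounded_linear Pt" unfolding Pt_def using proj_linear[OF Bt(1,3)] .
      have blin: "bounded_linear (\<lambda>x. Pt x - P x)" by (rule bounded_linear_sub[OF Ptbl Pbl])
      have on: "onorm (\<lambda>x. Pt x - P x) < 1/2"
        using d(2)[OF False] t unfolding Pt_def V_def by (simp add: dist_norm)
      have inj: "inj_on Pt K"
      proof (subst linear_inj_on_iff_eq_0[OF bounded_linear.linear[OF Ptbl]], simp add: K_def ker_subspace, intro ballI impI)
        fix y assume y: "y \<in> K" "Pt y = 0"
        have "P y = y" unfolding P_def using proj_id[OF B0(1) _ y(1)] B0(3) K_def by blast
        then have "norm y \<le> onorm (\<lambda>x. Pt x - P x) * norm y"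
          using onorm[OF blin, of y] y(2) by simp
        also have "\<dots> \<le> 1/2 * norm y" using on by (intro mult_right_mono) auto
        finally show "y = 0" by simp
      qed
      have ind: "independent (Pt ` B0)"
        by (rule linear_independent_injective_image[OF bounded_linear.linear[OF Ptbl] B0(2)])
           (use inj B0(3) K_def in simp)
      have sub: "Pt ` B0 \<subseteq> span Bt"
        using proj_in[OF Bt(1,3)] Bt(3) unfolding Pt_def by auto
      have B0K: "B0 \<subseteq> K" using span_superset[of B0] B0(3) K_def by simp
      have ij: "inj_on Pt B0" by (rule inj_on_subset[OF inj B0K])
      have "finite (Pt ` B0) \<and> card (Pt ` B0) \<le> card Bt" by (rule independent_span_bound[OF Bt(1) ind sub])
      then have "card (Pt ` B0) \<le> card Bt" by simp
      then have "card B0 \<le> card Bt" using card_image[OF ij] by simp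
      then have "card Bt = dim (ker_op H0)" using Bt(4) dimK K_def by simp
      then show ?thesis unfolding has_fin_dim_def V_def[symmetric] using Bt(1,2,3) by (intro exI[of _ Bt]) simp
    qed
  qed
  then show ?thesis using d(1) c0 by (intro exI[of _ "min d (1 / (2 * c))"]) auto
qed

theorem mainTheorem12:
  fixes H0 :: "'a::{real_inner,complete_space} \<Rightarrow>\<^sub>L 'a"
    and S :: "('a \<Rightarrow>\<^sub>L 'a) set"
  assumes "norm H0 = 1"
    and "\<exists>n. has_fin_dim (ker_op H0) n"
    and "\<exists>G. refl_gen_inverse G H0"
    and "\<forall>w\<in>S. norm w = 1"
  shows "(\<forall>w\<in>S. ker_stable H0 w) \<longleftrightarrow>
         (\<forall>w\<in>S. \<exists>l0>0. \<forall>t::real. \<bar>t\<bar> < l0 \<longrightarrow>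
              has_fin_dim (ker_op (H0 + t *\<^sub>R w)) (dim (ker_op H0)))"
proof -
  obtain B0 where B0: "finite B0" "independent B0" "span B0 = ker_op H0"
    using assms(2) unfolding has_fin_dim_def by blast
  obtain G where G: "refl_gen_inverse G H0" using assms(3) by blast
  show ?thesis
    using forward[OF B0 G] backward[OF B0 G] assms(4) by metis
qed

end
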